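(* In the database model described in the context, let $0<\alpha\le1$, let $t_\alpha\ge0$ be the largest $t\ge0$ such that $P(LR(S)\ge t)\ge\alpha$, and let $\mathcal D_\alpha=\{i\in\{1,\dots,N\}: LR(P_i)\ge t_\alpha\}$. Then $t_\alpha$ exists, and, if $\pi_{\mathcal D}>0$, \[ P(R\in\mathcal D_\alpha\mid R\in\mathcal D)=P(LR(S)\ge t_\alpha)\ge\alpha, \] so that $P(R\in\mathcal D_\alpha)\ge\alpha\,P(R\in\mathcal D)$.
   Context: Let $E$ be a countable set and let $S$, $G$ be $E$-valued random variables such that for every $e\in E$, $P(S=e)>0$ implies $P(G=e)>0$. For $e\in E$ define the likelihood ratio $LR(e)=P(S=e)/P(G=e)$ if $P(G=e)>0$ and $LR(e)=0$ otherwise. Database model: fix $N\ge1$. Let $R$ be a random variable with values in $\{0,1,\dots,N\}$; we write $R\in\mathcal D$ for $R\in\{1,\dots,N\}$ and $R\notin\mathcal D$ for $R=0$. Put $\pi_i=P(R=i)$ for $1\le i\le N$ and $\pi_{\mathcal D}=\sum_{i=1}^N\pi_i$. There are $E$-valued random variables $P_1,\dots,P_N$ such that conditionally on $R=i$ with $1\le i\le N$, they are independent, $P_i$ has the distribution of $S$ and $P_j$ ($j\ne i$) has the distribution of $G$; and conditionally on $R=0$ they are independent, each with the distribution of $G$. *)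

theory Defs
  imports "HOL-Probability.Probability"
begin

text \<open>Likelihood ratio of e, where s and g are the distributions (pmfs) of S and G on the
  countable value type.\<close>
definition LR :: "'e pmf \<Rightarrow> 'e pmf \<Rightarrow> 'e \<Rightarrow> real" where
  "LR s g e = (if pmf g e > 0 then pmf s e / pmf g e else 0)"

end

theory Submission imports Defs begin
lemma L:
  fixes X :: "'e::countable \<Rightarrow> 'a set" and p :: "'e pmf"
  assumes M: "prob_space M" and sets: "\<And>x. X x \<in> sets M"
    and disj: "disjoint_family X" and c: "c \<ge> 0"
    and meas: "\<And>x. measure M (X x) = c * pmf p x"
  shows "measure M (\<Union>x\<in>B. X x) = c * measure_pmf.prob p B"
proof -
  interpret prob_space M by fact
  have "emeasure M (\<Union>x\<in>B. X x) = (\<integral>\<^sup>+x. emeasure M (X x) \<partial>count_space B)"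
    by (rule emeasure_UN_countable) (auto simp: sets disjoint_family_on_mono[OF _ disj])
  also have "\<dots> = (\<integral>\<^sup>+x. ennreal c * (ennreal (pmf p x) * indicator B x) \<partial>count_space UNIV)"
    by (simp add: nn_integral_count_space_indicator emeasure_eq_measure meas ennreal_mult c mult.assoc)
  also have "\<dots> = ennreal c * (\<integral>\<^sup>+x. ennreal (pmf p x) * indicator B x \<partial>count_space UNIV)"
    by (rule nn_integral_cmult) simp
  also have "(\<integral>\<^sup>+x. ennreal (pmf p x) * indicator B x \<partial>count_space UNIV) = emeasure (measure_pmf p) B"
    by (simp add: nn_integral_measure_pmf[symmetric])
  finally have "emeasure M (\<Union>x\<in>B. X x) = ennreal (c * measure_pmf.prob p B)"
    by (simp add: measure_pmf.emeasure_eq_measure ennreal_mult c)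
  then show ?thesis
    by (simp add: emeasure_eq_measure c)
qed

lemma Marg:
  fixes M :: "'a measure" and P :: "nat \<Rightarrow> 'a \<Rightarrow> 'e::countable" and q :: "nat \<Rightarrow> 'e pmf"
  assumes M: "prob_space M"
    and R_meas: "R \<in> measurable M (count_space UNIV)"
    and P_meas: "\<And>j. j \<in> {1..N} \<Longrightarrow> P j \<in> measurable M (count_space UNIV)"
    and joint: "\<And>e :: nat \<Rightarrow> 'e.
        measure M {\<omega> \<in> space M. R \<omega> = i \<and> (\<forall>j\<in>{1..N}. P j \<omega> = e j)}
        = measure M {\<omega> \<in> space M. R \<omega> = i} * (\<Prod>j\<in>{1..N}. pmf (q j) (e j))"
    and K: "K \<subseteq> {1..N}"
  shows "\<forall>e. measure M {\<omega> \<in> space M. R \<omega> = i \<and> (\<forall>j\<in>{1..N}-K. P j \<omega> = e j)}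
        = measure M {\<omega> \<in> space M. R \<omega> = i} * (\<Prod>j\<in>{1..N}-K. pmf (q j) (e j))"
proof -
  interpret prob_space M by fact
  define c where "c = measure M {\<omega> \<in> space M. R \<omega> = i}"
  have c0: "c \<ge> 0" unfolding c_def by simp
  have sets: "{\<omega> \<in> space M. R \<omega> = i \<and> (\<forall>j\<in>J. P j \<omega> = e j)} \<in> sets M"
    if "J \<subseteq> {1..N}" for J e
  proof -
    have fin: "finite J" using that finite_subset by blast
    have "{\<omega> \<in> space M. R \<omega> = i} \<in> sets M"
      using measurable_sets[OF R_meas, of "{i}"] by (simp add: vimage_def Int_def conj_commute)
    moreover have "{\<omega> \<in> space M. \<forall>j\<in>J. P j \<omega> = e j} \<in> sets M"
    proof (rule sets.sets_Collect_finite_All[OF _ fin])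
      fix j assume "j \<in> J"
      then have "j \<in> {1..N}" using that by auto
      then show "{\<omega> \<in> space M. P j \<omega> = e j} \<in> sets M"
        using measurable_sets[OF P_meas, of j "{e j}"] by (simp add: vimage_def Int_def conj_commute)
    qed
    ultimately have "{\<omega> \<in> space M. R \<omega> = i} \<inter> {\<omega> \<in> space M. \<forall>j\<in>J. P j \<omega> = e j} \<in> sets M"
      by blast
    moreover have "{\<omega> \<in> space M. R \<omega> = i \<and> (\<forall>j\<in>J. P j \<omega> = e j)} = 
       {\<omega> \<in> space M. R \<omega> = i} \<inter> {\<omega> \<in> space M. \<forall>j\<in>J. P j \<omega> = e j}" by blast
    ultimately show ?thesis by simp
  qed
  have fin: "finite K" using K finite_subset by blast
  show ?thesis
    using fin K
  proof (induction K rule: finite_subset_induct')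
    case empty
    then show ?case using joint by (simp add: c_def)
  next
    case (insert k K)
    show ?case
    proof
      fix e
      let ?J = "{1..N} - K" and ?J' = "{1..N} - insert k K"
      have kJ: "k \<in> ?J" using insert by auto
      have J': "?J' = ?J - {k}" by auto
      let ?X = "\<lambda>x. {\<omega> \<in> space M. R \<omega> = i \<and> (\<forall>j\<in>?J. P j \<omega> = (e(k:=x)) j)}"
      have un: "{\<omega> \<in> space M. R \<omega> = i \<and> (\<forall>j\<in>?J'. P j \<omega> = e j)} = (\<Union>x\<in>UNIV. ?X x)"
        using kJ by (auto simp: J')
      have "measure M (\<Union>x\<in>UNIV. ?X x) = (c * (\<Prod>j\<in>?J'. pmf (q j) (e j))) * measure_pmf.prob (q k) UNIV"
      proof (rule L[OF M])
        show "?X x \<in> sets M" for x by (rule sets) auto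
        show "disjoint_family ?X" using kJ by (auto simp: disjoint_family_on_def)
        show "0 \<le> c * (\<Prod>j\<in>?J'. pmf (q j) (e j))" using c0 by (simp add: prod_nonneg)
        fix x
        have "measure M (?X x) = c * (\<Prod>j\<in>?J. pmf (q j) ((e(k:=x)) j))"
          using insert.IH by (simp add: c_def)
        also have "(\<Prod>j\<in>?J. pmf (q j) ((e(k:=x)) j)) = pmf (q k) x * (\<Prod>j\<in>?J'. pmf (q j) ((e(k:=x)) j))"
          using prod.remove[OF _ kJ, of "\<lambda>j. pmf (q j) ((e(k:=x)) j)"] J' by simp
        also have "(\<Prod>j\<in>?J'. pmf (q j) ((e(k:=x)) j)) = (\<Prod>j\<in>?J'. pmf (q j) (e j))"
          by (rule prod.cong) auto
        finally show "measure M (?X x) = c * (\<Prod>j\<in>?J'. pmf (q j) (e j)) * pmf (q k) x"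
          by (simp only: mult_ac)
      qed
      then show "measure M {\<omega> \<in> space M. R \<omega> = i \<and> (\<forall>j\<in>?J'. P j \<omega> = e j)}
        = measure M {\<omega> \<in> space M. R \<omega> = i} * (\<Prod>j\<in>?J'. pmf (q j) (e j))"
        unfolding un by (simp add: c_def measure_pmf.prob_space)
    qed
  qed
qed

lemma thresh:
  fixes p :: "'e pmf" and f :: "'e \<Rightarrow> real" and \<alpha> :: real
  assumes f0: "\<And>e. f e \<ge> 0" and a: "0 < \<alpha>" "\<alpha> \<le> 1"
  shows "\<exists>T. T \<ge> 0 \<and> measure_pmf.prob p {e. f e \<ge> T} \<ge> \<alpha>
             \<and> (\<forall>t\<ge>0. measure_pmf.prob p {e. f e \<ge> t} \<ge> \<alpha> \<longrightarrow> t \<le> T)"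
proof -
  define F where "F t = measure_pmf.prob p {e. f e \<ge> t}" for t
  have mono: "F t \<le> F u" if "u \<le> t" for u t
    unfolding F_def using that by (intro measure_pmf.finite_measure_mono) auto
  define S where "S = {t. 0 \<le> t \<and> \<alpha> \<le> F t}"
  have F0: "F 0 = 1" unfolding F_def using f0 by (simp add: measure_pmf.prob_space)
  have S0: "0 \<in> S" using F0 a by (simp add: S_def)
  have "(\<lambda>n. measure_pmf.prob p {e. real n \<le> f e}) \<longlonglongrightarrow> measure_pmf.prob p (\<Inter>n. {e. real n \<le> f e})"
    by (rule measure_pmf.finite_Lim_measure_decseq) (auto simp: decseq_def)
  moreover have "(\<Inter>n. {e. real n \<le> f e}) = {}"
  proof -
    have "\<not> (\<forall>n. real n \<le> f e)" for e
      using reals_Archimedean2[of "f e"] by (auto simp: not_le)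
    then show ?thesis by auto
  qed
  ultimately have "(\<lambda>n. F (real n)) \<longlonglongrightarrow> 0" by (simp add: F_def)
  then have "eventually (\<lambda>n. F (real n) < \<alpha>) sequentially"
    using a by (intro order_tendstoD) auto
  then obtain n0 where n0: "F (real n0) < \<alpha>" by (auto simp: eventually_sequentially)
  have bdd: "t \<le> real n0" if "t \<in> S" for t
  proof (rule ccontr)
    assume "\<not> t \<le> real n0"
    then have "F t \<le> F (real n0)" by (intro mono) auto
    with n0 that show False by (auto simp: S_def)
  qed
  define T where "T = Sup S"
  have bddS: "bdd_above S" using bdd by (auto simp: bdd_above_def)
  have upper: "t \<le> T" if "t \<in> S" for t
    unfolding T_def using that bddS by (rule cSup_upper)
  have T0: "T \<ge> 0" using upper S0 by auto
  have ge: "\<alpha> \<le> F (T - 1 / real (Suc n))" for n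
  proof -
    have "T - 1 / real (Suc n) < T" by simp
    then obtain t where "t \<in> S" "T - 1 / real (Suc n) < t"
      using S0 less_cSupE[of "T - 1 / real (Suc n)" S] unfolding T_def by blast
    then show ?thesis using mono[of "T - 1 / real (Suc n)" t] by (auto simp: S_def)
  qed
  have "(\<lambda>n. measure_pmf.prob p {e. T - 1 / real (Suc n) \<le> f e}) \<longlonglongrightarrow>
      measure_pmf.prob p (\<Inter>n. {e. T - 1 / real (Suc n) \<le> f e})"
  proof (rule measure_pmf.finite_Lim_measure_decseq)
    have "1 / real (Suc n) \<le> 1 / real (Suc m)" if "m \<le> n" for m n :: nat
      using that by (intro divide_left_mono) auto
    then show "decseq (\<lambda>n. {e. T - 1 / real (Suc n) \<le> f e})"
      unfolding decseq_def by (auto simp del: of_nat_Suc) (smt (verit))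
  qed auto
  moreover have "(\<Inter>n. {e. T - 1 / real (Suc n) \<le> f e}) = {e. T \<le> f e}"
  proof (rule set_eqI, rule iffI)
    fix e assume e: "e \<in> (\<Inter>n. {e. T - 1 / real (Suc n) \<le> f e})"
    show "e \<in> {e. T \<le> f e}"
    proof (rule ccontr)
      assume "e \<notin> {e. T \<le> f e}"
      then have "0 < T - f e" by auto
      then obtain n where "inverse (real (Suc n)) < T - f e"
        using reals_Archimedean by blast
      moreover have "T - 1 / real (Suc n) \<le> f e" using e by blast
      ultimately show False by (simp add: divide_inverse del: of_nat_Suc)
    qed
  next
    fix e assume "e \<in> {e. T \<le> f e}"
    then show "e \<in> (\<Inter>n. {e. T - 1 / real (Suc n) \<le> f e})"
      by auto (smt (verit) divide_nonneg_nonneg of_nat_0_le_iff)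
  qed
  ultimately have "(\<lambda>n. F (T - 1 / real (Suc n))) \<longlonglongrightarrow> F T" by (simp add: F_def)
  then have "\<alpha> \<le> F T"
    by (rule tendsto_lowerbound) (use ge in auto)
  then show ?thesis
    using T0 upper unfolding F_def S_def by auto
qed

theorem mainTheorem5:
  fixes s g :: "'e::countable pmf"
    and M :: "'a measure"
    and N :: nat
    and R :: "'a \<Rightarrow> nat"
    and P :: "nat \<Rightarrow> 'a \<Rightarrow> 'e"
    and \<alpha> :: real
  assumes supp: "\<And>e. pmf s e > 0 \<Longrightarrow> pmf g e > 0"
    and N: "N \<ge> 1"
    and M: "prob_space M"
    and R_meas: "R \<in> measurable M (count_space UNIV)"
    and R_range: "\<And>\<omega>. \<omega> \<in> space M \<Longrightarrow> R \<omega> \<le> N"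
    and P_meas: "\<And>j. j \<in> {1..N} \<Longrightarrow> P j \<in> measurable M (count_space UNIV)"
    and joint: "\<And>i (e :: nat \<Rightarrow> 'e). i \<le> N \<Longrightarrow>
        measure M {\<omega> \<in> space M. R \<omega> = i \<and> (\<forall>j\<in>{1..N}. P j \<omega> = e j)}
        = measure M {\<omega> \<in> space M. R \<omega> = i}
          * (\<Prod>j\<in>{1..N}. pmf (if j = i then s else g) (e j))"
    and alpha: "0 < \<alpha>" "\<alpha> \<le> 1"
  shows "\<exists>t\<^sub>\<alpha>::real.
           (t\<^sub>\<alpha> \<ge> 0 \<and> measure_pmf.prob s {e. LR s g e \<ge> t\<^sub>\<alpha>} \<ge> \<alpha>
             \<and> (\<forall>t\<ge>0. measure_pmf.prob s {e. LR s g e \<ge> t} \<ge> \<alpha> \<longrightarrow> t \<le> t\<^sub>\<alpha>))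
         \<and> (measure M {\<omega> \<in> space M. R \<omega> \<in> {1..N}} > 0 \<longrightarrow>
              cond_prob M (\<lambda>\<omega>. R \<omega> \<in> {i \<in> {1..N}. LR s g (P i \<omega>) \<ge> t\<^sub>\<alpha>})
                          (\<lambda>\<omega>. R \<omega> \<in> {1..N})
                = measure_pmf.prob s {e. LR s g e \<ge> t\<^sub>\<alpha>}
            \<and> measure_pmf.prob s {e. LR s g e \<ge> t\<^sub>\<alpha>} \<ge> \<alpha>
            \<and> measure M {\<omega> \<in> space M. R \<omega> \<in> {i \<in> {1..N}. LR s g (P i \<omega>) \<ge> t\<^sub>\<alpha>}}
                \<ge> \<alpha> * measure M {\<omega> \<in> space M. R \<omega> \<in> {1..N}})"
proof -
  interpret prob_space M by fact
  have LR0: "\<And>e. LR s g e \<ge> 0" by (simp add: LR_def)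
  obtain T where T0: "T \<ge> 0" and TF: "measure_pmf.prob s {e. LR s g e \<ge> T} \<ge> \<alpha>"
    and Tmax: "\<forall>t\<ge>0. measure_pmf.prob s {e. LR s g e \<ge> t} \<ge> \<alpha> \<longrightarrow> t \<le> T"
    using thresh[where p=s and f="LR s g", OF LR0 alpha] by auto
  define F where "F = measure_pmf.prob s {e. LR s g e \<ge> T}"
  have setR: "{\<omega> \<in> space M. R \<omega> = i} \<in> sets M" for i
    using measurable_sets[OF R_meas, of "{i}"] by (simp add: vimage_def Int_def conj_commute)
  have setP: "{\<omega> \<in> space M. P j \<omega> = x} \<in> sets M" if "j \<in> {1..N}" for j x
    using measurable_sets[OF P_meas[OF that], of "{x}"] by (simp add: vimage_def Int_def conj_commute)
  have Ai: "measure M {\<omega> \<in> space M. R \<omega> = i \<and> T \<le> LR s g (P i \<omega>)}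
            = measure M {\<omega> \<in> space M. R \<omega> = i} * F" if i: "i \<in> {1..N}" for i
  proof -
    have "\<forall>e. measure M {\<omega> \<in> space M. R \<omega> = i \<and> (\<forall>j\<in>{1..N}-({1..N}-{i}). P j \<omega> = e j)}
        = measure M {\<omega> \<in> space M. R \<omega> = i} * (\<Prod>j\<in>{1..N}-({1..N}-{i}). pmf (if j = i then s else g) (e j))"
      by (rule Marg[OF M R_meas P_meas]) (use joint i in auto)
    moreover have "{1..N}-({1..N}-{i}) = {i}" using i by auto
    ultimately have pt: "measure M {\<omega> \<in> space M. R \<omega> = i \<and> P i \<omega> = x}
        = measure M {\<omega> \<in> space M. R \<omega> = i} * pmf s x" for x
      by (drule_tac x="\<lambda>_. x" in spec) simp
    have "measure M (\<Union>x\<in>{e. T \<le> LR s g e}. {\<omega> \<in> space M. R \<omega> = i \<and> P i \<omega> = x})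
        = measure M {\<omega> \<in> space M. R \<omega> = i} * measure_pmf.prob s {e. T \<le> LR s g e}"
    proof (rule L[OF M])
      show "{\<omega> \<in> space M. R \<omega> = i \<and> P i \<omega> = x} \<in> sets M" for x
      proof -
        have "{\<omega> \<in> space M. R \<omega> = i \<and> P i \<omega> = x} = {\<omega> \<in> space M. R \<omega> = i} \<inter> {\<omega> \<in> space M. P i \<omega> = x}"
          by blast
        then show ?thesis using sets.Int[OF setR[of i] setP[OF i, of x]] by simp
      qed
      show "disjoint_family (\<lambda>x. {\<omega> \<in> space M. R \<omega> = i \<and> P i \<omega> = x})"
        by (auto simp: disjoint_family_on_def)
    qed (simp_all add: pt)
    moreover have "(\<Union>x\<in>{e. T \<le> LR s g e}. {\<omega> \<in> space M. R \<omega> = i \<and> P i \<omega> = x})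
        = {\<omega> \<in> space M. R \<omega> = i \<and> T \<le> LR s g (P i \<omega>)}" by auto
    ultimately show ?thesis by (simp add: F_def)
  qed
  have setA: "{\<omega> \<in> space M. R \<omega> = i \<and> T \<le> LR s g (P i \<omega>)} \<in> sets M" if i: "i \<in> {1..N}" for i
  proof -
    have "{\<omega> \<in> space M. R \<omega> = i \<and> T \<le> LR s g (P i \<omega>)}
        = (\<Union>x\<in>{e. T \<le> LR s g e}. {\<omega> \<in> space M. R \<omega> = i} \<inter> {\<omega> \<in> space M. P i \<omega> = x})" by auto
    also have "\<dots> \<in> sets M" using setR setP[OF i] by (intro sets.countable_UN') auto
    finally show ?thesis .
  qed
  have U1: "{\<omega> \<in> space M. R \<omega> \<in> {i \<in> {1..N}. T \<le> LR s g (P i \<omega>)}}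
      = (\<Union>i\<in>{1..N}. {\<omega> \<in> space M. R \<omega> = i \<and> T \<le> LR s g (P i \<omega>)})" by auto
  have U2: "{\<omega> \<in> space M. R \<omega> \<in> {i \<in> {1..N}. T \<le> LR s g (P i \<omega>)} \<and> R \<omega> \<in> {1..N}}
      = (\<Union>i\<in>{1..N}. {\<omega> \<in> space M. R \<omega> = i \<and> T \<le> LR s g (P i \<omega>)})" by auto
  have U3: "{\<omega> \<in> space M. R \<omega> \<in> {1..N}} = (\<Union>i\<in>{1..N}. {\<omega> \<in> space M. R \<omega> = i})" by auto
  have mD: "measure M (\<Union>i\<in>{1..N}. {\<omega> \<in> space M. R \<omega> = i \<and> T \<le> LR s g (P i \<omega>)})
      = (\<Sum>i\<in>{1..N}. measure M {\<omega> \<in> space M. R \<omega> = i \<and> T \<le> LR s g (P i \<omega>)})"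
    by (rule measure_finite_Union) (auto simp: setA disjoint_family_on_def)
  have mR: "measure M (\<Union>i\<in>{1..N}. {\<omega> \<in> space M. R \<omega> = i})
      = (\<Sum>i\<in>{1..N}. measure M {\<omega> \<in> space M. R \<omega> = i})"
    by (rule measure_finite_Union) (auto simp: setR disjoint_family_on_def)
  have key: "measure M {\<omega> \<in> space M. R \<omega> \<in> {i \<in> {1..N}. T \<le> LR s g (P i \<omega>)}}
      = F * measure M {\<omega> \<in> space M. R \<omega> \<in> {1..N}}"
  proof -
    have "(\<Sum>i\<in>{1..N}. measure M {\<omega> \<in> space M. R \<omega> = i \<and> T \<le> LR s g (P i \<omega>)})
       = (\<Sum>i\<in>{1..N}. measure M {\<omega> \<in> space M. R \<omega> = i} * F)"
      by (rule sum.cong) (simp_all only: Ai)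
    also have "\<dots> = F * (\<Sum>i\<in>{1..N}. measure M {\<omega> \<in> space M. R \<omega> = i})"
      by (simp only: sum_distrib_left ac_simps)
    finally show ?thesis unfolding U1 U3 mD mR .
  qed
  have key2: "measure M {\<omega> \<in> space M. R \<omega> \<in> {i \<in> {1..N}. T \<le> LR s g (P i \<omega>)} \<and> R \<omega> \<in> {1..N}}
      = F * measure M {\<omega> \<in> space M. R \<omega> \<in> {1..N}}"
    using key unfolding U1 U2 .
  show ?thesis
  proof (intro exI[of _ T] conjI impI)
    show "T \<ge> 0" "measure_pmf.prob s {e. LR s g e \<ge> T} \<ge> \<alpha>" by fact+
    show "\<forall>t\<ge>0. measure_pmf.prob s {e. LR s g e \<ge> t} \<ge> \<alpha> \<longrightarrow> t \<le> T" by fact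
    show "measure_pmf.prob s {e. LR s g e \<ge> T} \<ge> \<alpha>" by fact
    assume pos: "measure M {\<omega> \<in> space M. R \<omega> \<in> {1..N}} > 0"
    show "cond_prob M (\<lambda>\<omega>. R \<omega> \<in> {i \<in> {1..N}. LR s g (P i \<omega>) \<ge> T}) (\<lambda>\<omega>. R \<omega> \<in> {1..N})
        = measure_pmf.prob s {e. LR s g e \<ge> T}"
      unfolding cond_prob_def using key2 pos by (simp add: F_def)
    show "measure M {\<omega> \<in> space M. R \<omega> \<in> {i \<in> {1..N}. LR s g (P i \<omega>) \<ge> T}}
        \<ge> \<alpha> * measure M {\<omega> \<in> space M. R \<omega> \<in> {1..N}}"
      unfolding key F_def using TF by (intro mult_right_mono) auto
  qed
qed

end
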